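(* Let $G$ be a graph on $n$ vertices with $n>2$ even, and let $k=n/2$. Then the complement map $\mathfrak{c}$ of $F_k(G)$ does not belong to $\iota(\operatorname{Aut}(G))=\{\iota(\phi):\phi\in\operatorname{Aut}(G)\}$.
   Context: $F_k(G)$ is the graph on the $k$-subsets of $V(G)$ in which $A,B$ are adjacent iff $A\triangle B$ is an edge of $G$. For $\phi\in\operatorname{Aut}(G)$, $\iota(\phi)$ is the automorphism of $F_k(G)$ mapping $A$ to $\{\phi(v):v\in A\}$. The complement map $\mathfrak{c}$ sends each $k$-subset $A$ of $V(G)$ to $V(G)\setminus A$; when $k=n/2$ it is an automorphism of $F_k(G)$. *)

theory Defs
  imports Main
begin

definition simple_graph :: "'a set \<Rightarrow> ('a \<Rightarrow> 'a \<Rightarrow> bool) \<Rightarrow> bool" where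
  "simple_graph V E \<longleftrightarrow> finite V \<and> (\<forall>u v. E u v \<longrightarrow> u \<in> V \<and> v \<in> V)
     \<and> (\<forall>u v. E u v \<longrightarrow> E v u) \<and> (\<forall>v. \<not> E v v)"

definition graph_aut :: "'a set \<Rightarrow> ('a \<Rightarrow> 'a \<Rightarrow> bool) \<Rightarrow> ('a \<Rightarrow> 'a) set" where
  "graph_aut V E = {\<phi>. bij_betw \<phi> V V \<and> (\<forall>u\<in>V. \<forall>v\<in>V. E (\<phi> u) (\<phi> v) \<longleftrightarrow> E u v)}"

text \<open>Vertices of the k-token graph F_k(G): the k-subsets of V.\<close>

definition k_subsets :: "'a set \<Rightarrow> nat \<Rightarrow> 'a set set" where
  "k_subsets V k = {A. A \<subseteq> V \<and> card A = k}"

definition token_adj :: "('a \<Rightarrow> 'a \<Rightarrow> bool) \<Rightarrow> 'a set \<Rightarrow> 'a set \<Rightarrow> bool" where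
  "token_adj E A B \<longleftrightarrow> (\<exists>u v. E u v \<and> (A - B) \<union> (B - A) = {u, v})"

definition iota :: "('a \<Rightarrow> 'a) \<Rightarrow> 'a set \<Rightarrow> 'a set" where
  "iota \<phi> A = \<phi> ` A"

definition compl_map :: "'a set \<Rightarrow> 'a set \<Rightarrow> 'a set" where
  "compl_map V A = V - A"

end

theory Submission
  imports Defs
begin

lemma ext_subset:
  assumes "finite V" "S \<subseteq> V" "card S \<le> k" "k \<le> card V"
  shows "\<exists>A. S \<subseteq> A \<and> A \<subseteq> V \<and> card A = k"
proof -
  have fS: "finite S" using assms finite_subset by blast
  have "card (V - S) = card V - card S" using assms fS by (simp add: card_Diff_subset)
  then have "k - card S \<le> card (V - S)" using assms by linarith
  then obtain T where T: "T \<subseteq> V - S" "card T = k - card S"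
    using obtain_subset_with_card_n[of "k - card S" "V - S"] by blast
  have fT: "finite T" using T(1) assms(1) finite_subset by blast
  have "card (S \<union> T) = card S + card T"
    using T(1) fS fT by (subst card_Un_disjoint) auto
  then have "card (S \<union> T) = k" using T(2) assms(3) by simp
  moreover have "S \<union> T \<subseteq> V" using T(1) assms(2) by blast
  ultimately show ?thesis by blast
qed

theorem proposition6:
  fixes V :: "'a set" and E :: "'a \<Rightarrow> 'a \<Rightarrow> bool" and k :: nat
  assumes "simple_graph V E"
    and "card V > 2" and "even (card V)"
    and "k = card V div 2"
  shows "\<not> (\<exists>\<phi>\<in>graph_aut V E. \<forall>A\<in>k_subsets V k. iota \<phi> A = compl_map V A)"
proof
  assume "\<exists>\<phi>\<in>graph_aut V E. \<forall>A\<in>k_subsets V k. iota \<phi> A = compl_map V A"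
  then obtain \<phi> where ph: "bij_betw \<phi> V V" and H: "\<And>A. A \<subseteq> V \<Longrightarrow> card A = k \<Longrightarrow> \<phi> ` A = V - A"
    unfolding graph_aut_def k_subsets_def iota_def compl_map_def by auto
  have fin: "finite V" using assms(1) unfolding simple_graph_def by blast
  have k2: "2 \<le> k" "k \<le> card V" using assms(2,3,4) by auto
  then have "V \<noteq> {}" by auto
  then obtain x where x: "x \<in> V" by blast
  have px: "\<phi> x \<in> V" using ph x bij_betwE by blast
  have "card {x, \<phi> x} \<le> 2" by (simp add: card_insert_le_m1)
  then obtain A where A: "{x, \<phi> x} \<subseteq> A" "A \<subseteq> V" "card A = k"
    using ext_subset[of V "{x, \<phi> x}" k] fin x px k2 by (meson empty_subsetI insert_subset order_trans)
  have "\<phi> x \<in> \<phi> ` A" using A by auto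
  then have "\<phi> x \<in> V - A" using H[OF A(2,3)] by simp
  then show False using A(1) by blast
qed

end
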